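(* Let $p\ge2$, $n,\ell,t$ be positive integers, $r\le n$ a nonnegative integer, $\xi$ a prime with $\xi>\max(t,r)$, and $\mathbf{a}=(a_1,\dots,a_t)\in\{0,1,\dots,\xi-1\}^t$. Then the code $\mathcal{C}_{p,t,\ell}(n,r,\mathbf{a},\xi)$ is $t$-zero-block-insertion-correcting with block length $\ell$.
   Context: $\mathbb{Z}_p=\{0,1,\dots,p-1\}$. Any $\mathbf{z}\in\mathbb{Z}_p^n$ of Hamming weight $r$ can be written uniquely as $\mathbf{z}=0^{b_1}u_10^{b_2}u_2\cdots u_r0^{b_{r+1}}$ with $u_i\in\mathbb{Z}_p\setminus\{0\}$ and $b_i\ge0$ (so $b_i$ is the number of zeros having exactly $i-1$ nonzero symbols to their left). Define $$\mathcal{C}_{p,t,\ell}(n,r,\mathbf{a},\xi)=\Bigl\{\mathbf{z}\in\mathbb{Z}_p^n:\ \mathrm{wt}_H(\mathbf{z})=r,\ \sum_{i=1}^{r+1}i^q\Bigl\lfloor\frac{b_i}{\ell}\Bigr\rfloor\equiv a_q\pmod{\xi}\text{ for all }1\le q\le t\Bigr\}.$$ A zero-block insertion of length $\ell$ transforms a word $\mathbf{u}\mathbf{w}$ into $\mathbf{u}0^\ell\mathbf{w}$ (for any split point). A code is $t$-zero-block-insertion-correcting (block length $\ell$) if for any two distinct codewords, the sets of words obtainable from them by at most $t$ successive zero-block insertions of length $\ell$ are disjoint. *)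

theory Defs
  imports "HOL-Computational_Algebra.Primes"
begin

definition wt_H :: "nat list \<Rightarrow> nat" where
  "wt_H z = length (filter (\<lambda>x. x \<noteq> 0) z)"

text \<open>b i z: number of zeros of z having exactly i-1 nonzero symbols to their left (i \<ge> 1).\<close>
definition zero_run :: "nat \<Rightarrow> nat list \<Rightarrow> nat" where
  "zero_run i z = card {j. j < length z \<and> z ! j = 0 \<and> wt_H (take j z) = i - 1}"

definition code_C :: "nat \<Rightarrow> nat \<Rightarrow> nat \<Rightarrow> nat \<Rightarrow> nat \<Rightarrow> (nat \<Rightarrow> nat) \<Rightarrow> nat \<Rightarrow> nat list set" where
  "code_C p t l n r a \<xi> = {z. length z = n \<and> set z \<subseteq> {0..<p} \<and> wt_H z = r \<and>
      (\<forall>q\<in>{1..t}. (\<Sum>i=1..r+1. i ^ q * (zero_run i z div l)) mod \<xi> = a q mod \<xi>)}"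

definition zero_block_ins :: "nat \<Rightarrow> (nat list \<times> nat list) set" where
  "zero_block_ins l = {(u @ w, u @ replicate l 0 @ w) | u w. True}"

definition ins_ball :: "nat \<Rightarrow> nat \<Rightarrow> nat list \<Rightarrow> nat list set" where
  "ins_ball l t x = {y. \<exists>k\<le>t. (x, y) \<in> zero_block_ins l ^^ k}"

definition zero_block_ins_correcting :: "nat \<Rightarrow> nat \<Rightarrow> nat list set \<Rightarrow> bool" where
  "zero_block_ins_correcting t l C \<longleftrightarrow>
     (\<forall>x\<in>C. \<forall>y\<in>C. x \<noteq> y \<longrightarrow> ins_ball l t x \<inter> ins_ball l t y = {})"

end

theory Submission
  imports Defs "HOL-Number_Theory.Cong"
begin


fun esym :: "nat \<Rightarrow> int list \<Rightarrow> int" where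
  "esym 0 xs = 1"
| "esym (Suc j) [] = 0"
| "esym (Suc j) (x # xs) = esym (Suc j) xs + x * esym j xs"

definition pw :: "nat \<Rightarrow> int list \<Rightarrow> int" where
  "pw q xs = (\<Sum>x\<leftarrow>xs. x ^ q)"

lemma pw_Cons[simp]: "pw q (x # xs) = x ^ q + pw q xs" and pw_Nil[simp]: "pw q [] = 0"
  by (simp_all add: pw_def)

lemma tele:
  fixes E :: "nat \<Rightarrow> int"
  shows "(\<Sum>i\<le>Suc n. (-1)^i * E (Suc n - i) * x^(Suc i)) + (\<Sum>i\<le>n. (-1)^i * x * E (n - i) * x^(Suc i)) = x * E (Suc n)"
proof -
  have "(\<Sum>i\<le>Suc n. (-1)^i * E (Suc n - i) * x^(Suc i)) = E (Suc n) * x + (\<Sum>i\<le>n. (-1)^(Suc i) * E (n - i) * x^(Suc (Suc i)))"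
    by (subst sum.atMost_Suc_shift) simp
  moreover have "(\<Sum>i\<le>n. (-1)^(Suc i) * E (n - i) * x^(Suc (Suc i))) = - (\<Sum>i\<le>n. (-1)^i * x * E (n - i) * x^(Suc i))"
    by (simp add: sum_negf[symmetric] algebra_simps)
  ultimately show ?thesis by simp
qed

lemma newton:
  "\<forall>m. of_nat (Suc m) * esym (Suc m) xs = (\<Sum>i\<le>m. (-1)^i * esym (m - i) xs * pw (Suc i) xs)"
proof (induction xs)
  case Nil
  then show ?case by simp
next
  case (Cons x xs)
  define E where "E = (\<lambda>j. esym j xs)"
  define P where "P = (\<lambda>i. pw i xs)"
  have IH: "\<And>m. of_nat (Suc m) * E (Suc m) = (\<Sum>i\<le>m. (-1)^i * E (m - i) * P (Suc i))"
    using Cons unfolding E_def P_def by blast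
  have ec: "\<And>j. esym j (x # xs) = E j + (if j = 0 then 0 else x * E (j - 1))"
    unfolding E_def by (case_tac j) auto
  show ?case
  proof
    fix m
    show "of_nat (Suc m) * esym (Suc m) (x # xs) = (\<Sum>i\<le>m. (-1)^i * esym (m - i) (x # xs) * pw (Suc i) (x # xs))"
    proof (cases m)
      case 0
      then show ?thesis using IH[of 0] by (simp add: ec P_def algebra_simps)
    next
      case (Suc n)
      have "(\<Sum>i\<le>m. (-1)^i * esym (m - i) (x # xs) * pw (Suc i) (x # xs))
          = (\<Sum>i\<le>Suc n. (-1)^i * E (Suc n - i) * P (Suc i))
          + (\<Sum>i\<le>Suc n. (if i \<le> n then (-1)^i * x * E (n - i) * P (Suc i) else 0))
          + (\<Sum>i\<le>Suc n. (-1)^i * E (Suc n - i) * x^(Suc i))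
          + (\<Sum>i\<le>Suc n. (if i \<le> n then (-1)^i * x * E (n - i) * x^(Suc i) else 0))"
        unfolding Suc by (simp add: ec P_def sum.distrib[symmetric] algebra_simps Suc_diff_le)
      also have "(\<Sum>i\<le>Suc n. (if i \<le> n then (-1)^i * x * E (n - i) * P (Suc i) else 0))
           = (\<Sum>i\<le>n. (-1)^i * x * E (n - i) * P (Suc i))"
        by (simp add: sum.atMost_Suc)
      also have "(\<Sum>i\<le>Suc n. (if i \<le> n then (-1)^i * x * E (n - i) * x^(Suc i) else 0))
           = (\<Sum>i\<le>n. (-1)^i * x * E (n - i) * x^(Suc i))"
        by (simp add: sum.atMost_Suc)
      also have "(\<Sum>i\<le>n. (-1)^i * x * E (n - i) * P (Suc i)) = x * (of_nat (Suc n) * E (Suc n))"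
      proof -
        have "(\<Sum>i\<le>n. (-1)^i * x * E (n - i) * P (Suc i)) = x * (\<Sum>i\<le>n. (-1)^i * E (n - i) * P (Suc i))"
          by (simp add: sum_distrib_left algebra_simps)
        then show ?thesis by (simp only: IH[of n, symmetric])
      qed
      finally have "(\<Sum>i\<le>m. (-1)^i * esym (m - i) (x # xs) * pw (Suc i) (x # xs))
          = of_nat (Suc m) * E (Suc m) + x * (of_nat (Suc n) * E (Suc n)) + x * E (Suc n)"
        using tele[where n=n and E=E and x=x] IH[of m] unfolding Suc by simp
      then show ?thesis unfolding Suc by (simp add: ec algebra_simps)
    qed
  qed
qed




lemma esym_cong:
  fixes m :: int
  assumes "prime m" "int K < m" "\<forall>q\<in>{1..K}. [pw q S = pw q T] (mod m)"
  shows "j \<le> K \<Longrightarrow> [esym j S = esym j T] (mod m)"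
proof (induction j rule: less_induct)
  case (less j)
  show ?case
  proof (cases j)
    case 0 then show ?thesis by simp
  next
    case (Suc n)
    have "[(\<Sum>i\<le>n. (-1)^i * esym (n - i) S * pw (Suc i) S) = (\<Sum>i\<le>n. (-1)^i * esym (n - i) T * pw (Suc i) T)] (mod m)"
    proof (rule cong_sum)
      fix i assume "i \<in> {..n}"
      then have "i \<le> n" by simp
      have "[esym (n - i) S = esym (n - i) T] (mod m)" using less Suc \<open>i \<le> n\<close> by auto
      moreover have "[pw (Suc i) S = pw (Suc i) T] (mod m)" using assms(3) less Suc \<open>i \<le> n\<close> by auto
      ultimately show "[(-1)^i * esym (n - i) S * pw (Suc i) S = (-1)^i * esym (n - i) T * pw (Suc i) T] (mod m)"
        by (intro cong_mult cong_refl)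
    qed
    then have "[of_nat (Suc n) * esym (Suc n) S = of_nat (Suc n) * esym (Suc n) T] (mod m)"
      using newton[of S] newton[of T] by metis
    moreover have "coprime (int (Suc n)) m"
    proof -
      have "\<not> m dvd int (Suc n)" using less Suc assms(2)
        by (metis zdvd_imp_le of_nat_0_less_iff zero_less_Suc of_nat_mono not_less le_less_trans)
      then show ?thesis using assms(1) by (simp add: prime_imp_coprime coprime_commute)
    qed
    ultimately show ?thesis using cong_mult_lcancel Suc by metis
  qed
qed

lemma esym_zero: "length xs < j \<Longrightarrow> esym j xs = 0"
  by (induction j xs rule: esym.induct) auto

lemma esym_len: "esym (length xs) xs = prod_list xs"
  by (induction xs) (auto simp: esym_zero)

lemma pw_0: "pw 0 xs = int (length xs)"
  by (induction xs) auto

lemma pw_shift: "pw q (map (\<lambda>x. x - c) xs) = (\<Sum>i\<le>q. of_nat (q choose i) * (-c)^(q-i) * pw i xs)"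
proof (induction xs)
  case Nil then show ?case by simp
next
  case (Cons x xs)
  have "(x - c)^q = (\<Sum>i\<le>q. of_nat (q choose i) * (-c)^(q-i) * x^i)"
    using binomial_ring[of x "-c" q] by (simp add: algebra_simps)
  then show ?case using Cons by (simp add: sum.distrib algebra_simps)
qed

lemma prime_dvd_prod_list_int:
  fixes m :: int
  assumes "prime m" "m dvd prod_list xs" shows "\<exists>x\<in>set xs. m dvd x"
  using assms(2)
proof (induction xs)
  case Nil then show ?case using assms(1) not_prime_unit by auto
next
  case (Cons a xs) then show ?case using assms(1) by (auto simp: prime_dvd_mult_iff)
qed

lemma pw_remove1: "s \<in> set T \<Longrightarrow> pw q T = s^q + pw q (remove1 s T)"
  by (induction T) auto

lemma mset_eq_of_pw:
  fixes m :: int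
  assumes "prime m"
  shows "length S = length T \<Longrightarrow> int (length S) < m \<Longrightarrow> \<forall>q\<in>{1..length S}. [pw q S = pw q T] (mod m)
    \<Longrightarrow> \<forall>a\<in>set S. \<forall>b\<in>set T. [a = b] (mod m) \<longrightarrow> a = b \<Longrightarrow> mset S = mset T"
proof (induction S arbitrary: T)
  case Nil then show ?case by simp
next
  case (Cons s S)
  define K where "K = length (s # S)"
  let ?S2 = "map (\<lambda>x. x - s) (s # S)" and ?T2 = "map (\<lambda>x. x - s) T"
  have pw2: "\<forall>q\<in>{1..K}. [pw q ?S2 = pw q ?T2] (mod m)"
  proof
    fix q assume q: "q \<in> {1..K}"
    show "[pw q ?S2 = pw q ?T2] (mod m)"
      unfolding pw_shift
    proof (rule cong_sum)
      fix i assume "i \<in> {..q}"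
      have "[pw i (s # S) = pw i T] (mod m)"
      proof (cases "i = 0")
        case True then show ?thesis using Cons.prems(1) by (simp add: pw_0 del: pw_Cons)
      next
        case False then show ?thesis using Cons.prems(3) q \<open>i \<in> {..q}\<close> K_def by auto
      qed
      then show "[of_nat (q choose i) * (-s)^(q-i) * pw i (s # S) = of_nat (q choose i) * (-s)^(q-i) * pw i T] (mod m)"
        by (intro cong_mult cong_refl)
    qed
  qed
  have "[esym K ?S2 = esym K ?T2] (mod m)"
    using esym_cong[OF assms, of K ?S2 ?T2 K] pw2 Cons.prems(2) K_def by simp
  moreover have "esym K ?S2 = 0"
    using esym_len[of ?S2] K_def by simp
  moreover have "esym K ?T2 = prod_list ?T2"
    using esym_len[of ?T2] K_def Cons.prems(1) by simp
  ultimately have "m dvd prod_list ?T2" by (metis cong_0_iff cong_sym)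
  then obtain b where b: "b \<in> set T" "m dvd b - s"
    using prime_dvd_prod_list_int[OF assms, of ?T2] by auto
  then have "[s = b] (mod m)" by (simp add: cong_iff_dvd_diff dvd_diff_commute)
  then have bs: "b = s" using Cons.prems(4) b by auto
  have IH: "mset S = mset (remove1 s T)"
  proof (rule Cons.IH)
    show "length S = length (remove1 s T)" using Cons.prems(1) b bs by (simp add: length_remove1)
    show "int (length S) < m" using Cons.prems(2) by simp
    show "\<forall>q\<in>{1..length S}. [pw q S = pw q (remove1 s T)] (mod m)"
    proof
      fix q assume "q \<in> {1..length S}"
      then have "[pw q (s # S) = pw q T] (mod m)"
        using Cons.prems(3) by auto
      then have "[s^q + pw q S = s^q + pw q (remove1 s T)] (mod m)"
        using pw_remove1[of s T q] b bs by simp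
      then show "[pw q S = pw q (remove1 s T)] (mod m)" by (simp add: cong_add_lcancel)
    qed
    show "\<forall>a\<in>set S. \<forall>b\<in>set (remove1 s T). [a = b] (mod m) \<longrightarrow> a = b"
      using Cons.prems(4) notin_set_remove1 by (metis list.set_intros(2) set_remove1_subset subsetD)
  qed
  then show ?case using b bs by simp
qed



fun zr :: "nat \<Rightarrow> nat list \<Rightarrow> nat" where
  "zr c [] = 0"
| "zr c (x # z) = (if x = 0 then (if c = 0 then 1 else 0) + zr c z else (if c = 0 then 0 else zr (c - 1) z))"

lemma card_Suc_split:
  "card {j. j < Suc n \<and> P j} = (if P 0 then 1 else 0) + card {j. j < n \<and> P (Suc j)}"
proof -
  have e: "{j. j < Suc n \<and> P j} = (if P 0 then {0} else {}) \<union> Suc ` {j. j < n \<and> P (Suc j)}"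
    by (auto simp: image_iff less_Suc_eq_0_disj)
  have "card (Suc ` {j. j < n \<and> P (Suc j)}) = card {j. j < n \<and> P (Suc j)}"
    by (simp add: card_image)
  then show ?thesis unfolding e by (auto simp: card_insert_if)
qed

lemma wt_H_Cons: "wt_H (x # z) = (if x = 0 then 0 else 1) + wt_H z"
  by (simp add: wt_H_def)

lemma card_zr: "card {j. j < length z \<and> z ! j = 0 \<and> wt_H (take j z) = c} = zr c z"
proof (induction z arbitrary: c)
  case Nil then show ?case by simp
next
  case (Cons x z)
  have "card {j. j < length (x # z) \<and> (x # z) ! j = 0 \<and> wt_H (take j (x # z)) = c}
    = (if x = 0 \<and> c = 0 then 1 else 0) + card {j. j < length z \<and> z ! j = 0 \<and> (if x = 0 then 0 else 1) + wt_H (take j z) = c}"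
    by (simp only: length_Cons card_Suc_split) (simp add: wt_H_Cons wt_H_def)
  also have "\<dots> = zr c (x # z)"
  proof (cases "x = 0")
    case True then show ?thesis using Cons[of c] by simp
  next
    case False
    show ?thesis
    proof (cases "c = 0")
      case True then show ?thesis using False by simp
    next
      case c: False
      have "{j. j < length z \<and> z ! j = 0 \<and> 1 + wt_H (take j z) = c} = {j. j < length z \<and> z ! j = 0 \<and> wt_H (take j z) = c - 1}"
        using c by auto
      then show ?thesis using False c Cons[of "c - 1"] by simp
    qed
  qed
  finally show ?case .
qed

lemma zero_run_zr: "zero_run i z = zr (i - 1) z"
  unfolding zero_run_def by (rule card_zr)

lemma zr_rep: "zr c (replicate l 0 @ w) = (if c = 0 then l else 0) + zr c w"
  by (induction l) auto

lemma zr_ins: "zr c (u @ replicate l 0 @ w) = zr c (u @ w) + (if c = wt_H u then l else 0)"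
proof (induction u arbitrary: c)
  case Nil then show ?case by (simp add: zr_rep wt_H_def)
next
  case (Cons a u)
  then show ?case by (auto simp: wt_H_Cons)
qed

lemma zr_reconstruct:
  "\<forall>c. zr c x = zr c y \<Longrightarrow> filter (\<lambda>v. v \<noteq> 0) x = filter (\<lambda>v. v \<noteq> 0) y \<Longrightarrow> x = y"
proof (induction x arbitrary: y)
  case Nil
  show ?case
  proof (cases y)
    case Nil then show ?thesis by simp
  next
    case (Cons b y')
    then show ?thesis using Nil.prems by (cases "b = 0") (auto dest: spec[of _ 0])
  qed
next
  case (Cons a x)
  show ?case
  proof (cases y)
    case Nil
    then show ?thesis using Cons.prems by (cases "a = 0") (auto dest: spec[of _ 0])
  next
    case Cons2: (Cons b y')
    show ?thesis
    proof (cases "a = 0")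
      case True
      then have "b = 0" using Cons.prems Cons2 by (auto dest: spec[of _ 0] split: if_splits)
      have "\<forall>c. zr c x = zr c y'"
      proof
        fix c show "zr c x = zr c y'" using Cons.prems(1) Cons2 True \<open>b = 0\<close> by (auto dest: spec[of _ c])
      qed
      then show ?thesis using Cons.IH[of y'] Cons.prems(2) Cons2 True \<open>b = 0\<close> by simp
    next
      case False
      then have "b \<noteq> 0" using Cons.prems Cons2 by (auto dest: spec[of _ 0] split: if_splits)
      have "\<forall>c. zr c x = zr c y'"
      proof
        fix c show "zr c x = zr c y'" using Cons.prems(1) Cons2 False \<open>b \<noteq> 0\<close> by (auto dest: spec[of _ "Suc c"])
      qed
      then show ?thesis using Cons.IH[of y'] Cons.prems(2) Cons2 False \<open>b \<noteq> 0\<close> by simp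
    qed
  qed
qed

lemma ins_iter:
  "(x, y) \<in> zero_block_ins l ^^ k \<Longrightarrow> length y = length x + k * l \<and>
     filter (\<lambda>v. v \<noteq> 0) y = filter (\<lambda>v. v \<noteq> 0) x \<and>
     (\<exists>L. length L = k \<and> set L \<subseteq> {..wt_H x} \<and> (\<forall>c. zr c y = zr c x + l * count (mset L) c))"
proof (induction k arbitrary: y)
  case 0 then show ?case by (auto intro: exI[of _ "[]"])
next
  case (Suc k)
  then obtain z where z: "(x, z) \<in> zero_block_ins l ^^ k" "(z, y) \<in> zero_block_ins l" by auto
  then obtain u w where uw: "z = u @ w" "y = u @ replicate l 0 @ w" unfolding zero_block_ins_def by auto
  from Suc.IH[OF z(1)] obtain L where L: "length z = length x + k * l"
    "filter (\<lambda>v. v \<noteq> 0) z = filter (\<lambda>v. v \<noteq> 0) x" "length L = k" "set L \<subseteq> {..wt_H x}"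
    "\<forall>c. zr c z = zr c x + l * count (mset L) c" by blast
  have wz: "wt_H z = wt_H x" using L(2) by (simp add: wt_H_def)
  have "wt_H u \<le> wt_H z" unfolding uw wt_H_def by simp
  then have "set (wt_H u # L) \<subseteq> {..wt_H x}" using L(4) wz by auto
  moreover have "\<forall>c. zr c y = zr c x + l * count (mset (wt_H u # L)) c"
    using L(5) uw by (auto simp: zr_ins algebra_simps)
  moreover have "length y = length x + Suc k * l" using L(1) uw by simp
  moreover have "filter (\<lambda>v. v \<noteq> 0) y = filter (\<lambda>v. v \<noteq> 0) x" using L(2) uw by simp
  ultimately show ?case using L(3) by (metis length_Cons)
qed



lemma sum_count:
  "set L \<subseteq> {..r} \<Longrightarrow> (\<Sum>c\<le>r. (c+1)^q * count (mset L) c) = (\<Sum>x\<leftarrow>L. (x+1)^q)"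
proof (induction L)
  case Nil then show ?case by simp
next
  case (Cons a L)
  have "(\<Sum>c\<le>r. (c+1)^q * count (mset (a # L)) c) = (\<Sum>c\<le>r. (if c = a then (c+1)^q else 0)) + (\<Sum>c\<le>r. (c+1)^q * count (mset L) c)"
  proof -
    have "\<And>c. (c+1)^q * count (mset (a # L)) c = (if c = a then (c+1)^q else 0) + (c+1)^q * count (mset L) c"
      by (simp add: algebra_simps)
    then show ?thesis by (simp only: sum.distrib[symmetric])
  qed
  also have "(\<Sum>c\<le>r. (if c = a then (c+1)^q else 0)) = (a+1)^q" using Cons.prems by (simp add: sum.delta)
  finally show ?case using Cons by simp
qed

lemma pw_map: "pw q (map (\<lambda>c. int c + 1) L) = int (\<Sum>x\<leftarrow>L. (x+1)^q)"
  by (induction L) (auto simp: add.commute)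

lemma code_sum: "(\<Sum>i=1..r+1. i ^ q * (zero_run i z div l)) = (\<Sum>c\<le>r. (c+1)^q * (zr c z div l))"
proof -
  have "(\<Sum>i=1..r+1. i ^ q * (zero_run i z div l)) = (\<Sum>c=0..r. (Suc c) ^ q * (zero_run (Suc c) z div l))"
    by (simp only: One_nat_def add_Suc_right add_0_right sum.shift_bounds_cl_Suc_ivl o_def)
  then show ?thesis by (simp add: zero_run_zr atMost_atLeast0)
qed

theorem lemma4:
  fixes p n l t r \<xi> :: nat and a :: "nat \<Rightarrow> nat"
  assumes "p \<ge> 2" "n > 0" "l > 0" "t > 0" "r \<le> n"
    and "prime \<xi>" "\<xi> > max t r"
    and "\<forall>q\<in>{1..t}. a q < \<xi>"
  shows "zero_block_ins_correcting t l (code_C p t l n r a \<xi>)"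
  unfolding zero_block_ins_correcting_def
proof (intro ballI impI)
  fix x y assume xC: "x \<in> code_C p t l n r a \<xi>" and yC: "y \<in> code_C p t l n r a \<xi>" and xy: "x \<noteq> y"
  show "ins_ball l t x \<inter> ins_ball l t y = {}"
  proof (rule ccontr)
    assume "ins_ball l t x \<inter> ins_ball l t y \<noteq> {}"
    then obtain z k1 k2 where k: "k1 \<le> t" "k2 \<le> t" "(x, z) \<in> zero_block_ins l ^^ k1" "(y, z) \<in> zero_block_ins l ^^ k2"
      unfolding ins_ball_def by blast
    have x: "length x = n" "wt_H x = r" "\<forall>q\<in>{1..t}. (\<Sum>i=1..r+1. i ^ q * (zero_run i x div l)) mod \<xi> = a q mod \<xi>"
      using xC unfolding code_C_def by auto
    have y: "length y = n" "wt_H y = r" "\<forall>q\<in>{1..t}. (\<Sum>i=1..r+1. i ^ q * (zero_run i y div l)) mod \<xi> = a q mod \<xi>"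
      using yC unfolding code_C_def by auto
    obtain L1 where L1: "length z = length x + k1 * l" "filter (\<lambda>v. v \<noteq> 0) z = filter (\<lambda>v. v \<noteq> 0) x"
      "length L1 = k1" "set L1 \<subseteq> {..r}" "\<forall>c. zr c z = zr c x + l * count (mset L1) c"
      using ins_iter[OF k(3)] x(2) by blast
    obtain L2 where L2: "length z = length y + k2 * l" "filter (\<lambda>v. v \<noteq> 0) z = filter (\<lambda>v. v \<noteq> 0) y"
      "length L2 = k2" "set L2 \<subseteq> {..r}" "\<forall>c. zr c z = zr c y + l * count (mset L2) c"
      using ins_iter[OF k(4)] y(2) by blast
    have k12: "k1 = k2" using L1(1) L2(1) x(1) y(1) assms(3) by simp
    have eqc: "\<And>c. zr c x + l * count (mset L1) c = zr c y + l * count (mset L2) c"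
      using L1(5) L2(5) by metis
    have divc: "\<And>c. zr c x div l + count (mset L1) c = zr c y div l + count (mset L2) c"
    proof -
      fix c
      have "(zr c x + l * count (mset L1) c) div l = (zr c y + l * count (mset L2) c) div l" using eqc by simp
      then show "zr c x div l + count (mset L1) c = zr c y div l + count (mset L2) c" using assms(3) by simp
    qed
    define S where "S = map (\<lambda>c. int c + 1) L1"
    define T where "T = map (\<lambda>c. int c + 1) L2"
    have pwc: "\<forall>q\<in>{1..length S}. [pw q S = pw q T] (mod int \<xi>)"
    proof
      fix q assume "q \<in> {1..length S}"
      then have q: "q \<in> {1..t}" using S_def L1(3) k(1) by auto
      define Fx where "Fx = (\<Sum>c\<le>r. (c+1)^q * (zr c x div l))"
      define Fy where "Fy = (\<Sum>c\<le>r. (c+1)^q * (zr c y div l))"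
      have "Fx + (\<Sum>c\<le>r. (c+1)^q * count (mset L1) c) = Fy + (\<Sum>c\<le>r. (c+1)^q * count (mset L2) c)"
        unfolding Fx_def Fy_def sum.distrib[symmetric] distrib_left[symmetric] divc by simp
      then have e: "Fx + (\<Sum>x\<leftarrow>L1. (x+1)^q) = Fy + (\<Sum>x\<leftarrow>L2. (x+1)^q)"
        using sum_count[OF L1(4)] sum_count[OF L2(4)] by simp
      have "[Fx = Fy] (mod \<xi>)" unfolding Fx_def Fy_def cong_def code_sum[symmetric] using x(3) y(3) q by simp
      then have c1: "[Fy + (\<Sum>x\<leftarrow>L1. (x+1)^q) = Fx + (\<Sum>x\<leftarrow>L1. (x+1)^q)] (mod \<xi>)"
        by (intro cong_add cong_refl) (rule cong_sym)
      have "[Fy + (\<Sum>x\<leftarrow>L1. (x+1)^q) = Fy + (\<Sum>x\<leftarrow>L2. (x+1)^q)] (mod \<xi>)"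
        using c1 e by simp
      then have "[(\<Sum>x\<leftarrow>L1. (x+1)^q) = (\<Sum>x\<leftarrow>L2. (x+1)^q)] (mod \<xi>)"
        by (simp add: cong_add_lcancel_nat)
      then show "[pw q S = pw q T] (mod int \<xi>)" unfolding S_def T_def pw_map by (simp add: cong_int_iff)
    qed
    have "mset S = mset T"
    proof (rule mset_eq_of_pw)
      show "prime (int \<xi>)" using assms(6) by (simp add: prime_nat_int_transfer)
      show "length S = length T" using S_def T_def L1(3) L2(3) k12 by simp
      show "int (length S) < int \<xi>" using S_def L1(3) k(1) assms(7) by simp
      show "\<forall>q\<in>{1..length S}. [pw q S = pw q T] (mod int \<xi>)" by (rule pwc)
      show "\<forall>a\<in>set S. \<forall>b\<in>set T. [a = b] (mod int \<xi>) \<longrightarrow> a = b"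
      proof (intro ballI impI)
        fix a b assume a: "a \<in> set S" and b: "b \<in> set T" and ab: "[a = b] (mod int \<xi>)"
        have "1 \<le> a" "a \<le> int r + 1" using a L1(4) S_def by auto
        moreover have "1 \<le> b" "b \<le> int r + 1" using b L2(4) T_def by auto
        moreover have "int r + 1 \<le> int \<xi>" using assms(7) by simp
        moreover have "int \<xi> dvd a - b" using ab by (simp add: cong_iff_dvd_diff)
        ultimately show "a = b"
        proof -
          assume h: "1 \<le> a" "a \<le> int r + 1" "1 \<le> b" "b \<le> int r + 1" "int r + 1 \<le> int \<xi>" "int \<xi> dvd a - b"
          show "a = b"
          proof (rule ccontr)
            assume "a \<noteq> b"
            then have "\<bar>int \<xi>\<bar> \<le> \<bar>a - b\<bar>" using dvd_imp_le_int[OF _ h(6)] by simp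
            then show False using h by linarith
          qed
        qed
      qed
    qed
    then have "image_mset (\<lambda>v. nat (v - 1)) (mset S) = image_mset (\<lambda>v. nat (v - 1)) (mset T)" by simp
    then have "mset L1 = mset L2" unfolding S_def T_def by (simp add: multiset.map_comp o_def)
    then have "\<forall>c. zr c x = zr c y" using eqc by simp
    moreover have "filter (\<lambda>v. v \<noteq> 0) x = filter (\<lambda>v. v \<noteq> 0) y" using L1(2) L2(2) by simp
    ultimately have "x = y" by (rule zr_reconstruct)
    then show False using xy by simp
  qed
qed

end
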